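(* Let $q\in(0,1)$ and let $\alpha,\beta,z\in\mathbb{C}$ with $|\alpha|<1$ and $z\neq0$. Then the sequences $(\psi_n^{+}(z))_{n\ge-1}$ and $(\psi_n^{-}(z))_{n\ge-1}$ are both solutions of the difference equation \[ \psi_{n-1}-(z+z^{-1})\frac{1-\beta q^n}{1-\alpha q^n}\psi_n+\psi_{n+1}=0,\qquad n\in\mathbb{N}_0. \] Moreover, their Wronskian $W(\psi^+,\psi^-):=\psi_n^+(z)\psi_{n+1}^-(z)-\psi_{n+1}^+(z)\psi_n^-(z)$ (which is independent of $n$) equals \[ W(\psi^+,\psi^-)=z^{-1}\left(z^2,qz^{-2};q\right)_\infty. \] Consequently, $\psi^{+}(z)$ and $\psi^-(z)$ are linearly independent if and only if $z\notin\pm q^{\mathbb{Z}/2}$.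
   Context: For $a\in\mathbb{C}$ and $n\in\mathbb{N}_0\cup\{\infty\}$, $(a;q)_n:=\prod_{j=0}^{n-1}(1-aq^j)$ and $(a_1,\dots,a_r;q)_n:=\prod_i(a_i;q)_n$. For $z\neq0$ define $c_k(z):=\prod_{j=0}^{k-1}\bigl(\alpha(1+z^2q^{2j})-\beta q^j(1+z^2)\bigr)$ (this equals $\alpha^k(z\tau,z\tau^{-1};q)_k$ for any $\tau\ne0$ with $\alpha(\tau+\tau^{-1})=\beta(z+z^{-1})$), and for integers $n\ge-1$, \[ \psi_n^{+}(z):=z^{n}\sum_{k=0}^{\infty}\frac{(q^{k+1}z^{2};q)_\infty}{(q;q)_k}\,c_k(z)\,q^{(n+1)k},\qquad \psi_n^-(z):=\psi_n^+(z^{-1}). \] When $z^2\notin q^{-\mathbb{N}}$ this is $\psi_n^+(z)=z^n(qz^2;q)_\infty\,{}_2\phi_1(z\tau,z\tau^{-1};qz^2;q,\alpha q^{n+1})$, where ${}_2\phi_1(a,b;c;q,w)=\sum_{k\ge0}\frac{(a,b;q)_k}{(c,q;q)_k}w^k$. $q^{\mathbb{Z}/2}$ denotes $\{q^{j/2}:j\in\mathbb{Z}\}$. *)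

theory Defs
  imports "HOL-Analysis.Analysis"
begin

definition qpoch :: "complex \<Rightarrow> real \<Rightarrow> nat \<Rightarrow> complex" where
  "qpoch a q n = (\<Prod>j<n. 1 - a * of_real q ^ j)"

definition qpoch_inf :: "complex \<Rightarrow> real \<Rightarrow> complex" where
  "qpoch_inf a q = (\<Prod>j. 1 - a * of_real q ^ j)"

definition ck :: "real \<Rightarrow> complex \<Rightarrow> complex \<Rightarrow> nat \<Rightarrow> complex \<Rightarrow> complex" where
  "ck q \<alpha> \<beta> k z = (\<Prod>j<k. \<alpha> * (1 + z^2 * of_real q ^ (2*j)) - \<beta> * of_real q ^ j * (1 + z^2))"

text \<open>psi^+_n(z) for integers n >= -1 (the formula is used for all integers n).\<close>
definition psi_plus :: "real \<Rightarrow> complex \<Rightarrow> complex \<Rightarrow> int \<Rightarrow> complex \<Rightarrow> complex" where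
  "psi_plus q \<alpha> \<beta> n z = z powi n *
     (\<Sum>k. qpoch_inf (of_real q ^ (k+1) * z^2) q / qpoch (of_real q) q k
            * ck q \<alpha> \<beta> k z * of_real q powi ((n+1) * int k))"

definition psi_minus :: "real \<Rightarrow> complex \<Rightarrow> complex \<Rightarrow> int \<Rightarrow> complex \<Rightarrow> complex" where
  "psi_minus q \<alpha> \<beta> n z = psi_plus q \<alpha> \<beta> n (inverse z)"

end

theory Submission
  imports Defs
begin


lemma qpoch_inf_has_prod:
  assumes "0 < q" "q < 1"
  shows "(\<lambda>j. 1 - a * of_real q ^ j) has_prod qpoch_inf a q"
proof -
  have "summable (\<lambda>j. norm a * q ^ j)"
    using assms by (intro summable_mult summable_geometric) auto
  hence "summable (\<lambda>j. norm ((1 - a * of_real q ^ j) - 1))"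
    using assms by (simp add: norm_mult norm_power)
  hence "abs_convergent_prod (\<lambda>j. 1 - a * of_real q ^ j)"
    by (rule summable_imp_abs_convergent_prod)
  hence "convergent_prod (\<lambda>j. 1 - a * of_real q ^ j)"
    by (rule abs_convergent_prod_imp_convergent_prod)
  thus ?thesis unfolding qpoch_inf_def by (rule convergent_prod_has_prod)
qed

lemma qpoch_inf_shift:
  assumes "0 < q" "q < 1"
  shows "qpoch_inf a q = (1 - a) * qpoch_inf (a * of_real q) q"
proof -
  have c: "convergent_prod (\<lambda>j. 1 - a * of_real q ^ j)"
    using qpoch_inf_has_prod[OF assms] has_prod_iff by blast
  have "(\<lambda>j. 1 - a * of_real q ^ j) has_prod ((\<Prod>k<1. 1 - a * of_real q ^ k) * (\<Prod>k. 1 - a * of_real q ^ (k+1)))"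
    by (rule has_prod_ignore_initial_segment'[OF c])
  moreover have "(\<Prod>k. 1 - a * of_real q ^ (k+1)) = qpoch_inf (a * of_real q) q"
    unfolding qpoch_inf_def by (simp add: mult.assoc)
  ultimately have h1: "(\<lambda>j. 1 - a * of_real q ^ j) has_prod ((1 - a) * qpoch_inf (a * of_real q) q)"
    by simp
  show ?thesis
    using has_prod_unique2[OF qpoch_inf_has_prod[OF assms, of a] h1] .
qed

lemma qpoch_inf_eq0_iff:
  assumes "0 < q" "q < 1"
  shows "qpoch_inf a q = 0 \<longleftrightarrow> (\<exists>j. a * of_real q ^ j = 1)"
proof -
  have "qpoch_inf a q = 0 \<longleftrightarrow> 0 \<in> range (\<lambda>j. 1 - a * of_real q ^ j)"
    by (rule has_prod_eq_0_iff[OF qpoch_inf_has_prod[OF assms, of a]])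
  also have "\<dots> \<longleftrightarrow> (\<exists>j. a * of_real q ^ j = 1)"
  proof
    assume "0 \<in> range (\<lambda>j. 1 - a * of_real q ^ j)"
    then obtain j where "0 = 1 - a * of_real q ^ j" by blast
    hence "a * of_real q ^ j = 1" by simp
    thus "\<exists>j. a * of_real q ^ j = 1" by blast
  next
    assume "\<exists>j. a * of_real q ^ j = 1"
    then obtain j where "a * of_real q ^ j = 1" by blast
    hence "0 = 1 - a * of_real q ^ j" by simp
    thus "0 \<in> range (\<lambda>j. 1 - a * of_real q ^ j)" by blast
  qed
  finally show ?thesis .
qed



definition AA :: "real \<Rightarrow> complex \<Rightarrow> nat \<Rightarrow> complex" where
  "AA q z k = qpoch_inf (of_real q ^ (k+1) * z^2) q / qpoch (of_real q) q k"

definition TT :: "real \<Rightarrow> complex \<Rightarrow> complex \<Rightarrow> complex \<Rightarrow> nat \<Rightarrow> complex" where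
  "TT q \<alpha> \<beta> z k = AA q z k * ck q \<alpha> \<beta> k z"

definition dd :: "real \<Rightarrow> complex \<Rightarrow> complex \<Rightarrow> complex \<Rightarrow> nat \<Rightarrow> complex" where
  "dd q \<alpha> \<beta> z k = \<alpha> * (1 + z^2 * of_real q ^ (2*k)) - \<beta> * of_real q ^ k * (1 + z^2)"

definition den :: "real \<Rightarrow> complex \<Rightarrow> nat \<Rightarrow> complex" where
  "den q z k = (1 - of_real q ^ (k+1)) * (1 - z^2 * of_real q ^ (k+1))"

lemma qpoch_nonzero:
  assumes "0 < q" "q < 1"
  shows "qpoch (of_real q) q k \<noteq> 0"
proof -
  have "1 - complex_of_real q * complex_of_real q ^ j \<noteq> 0" for j
  proof
    assume "1 - complex_of_real q * complex_of_real q ^ j = 0"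
    hence "complex_of_real (q ^ Suc j) = 1" by simp
    hence "q ^ Suc j = 1" using of_real_eq_1_iff by blast
    moreover have "q ^ Suc j < 1"
    proof -
      have "q ^ j \<le> 1" using assms by (intro power_le_one) auto
      hence "q * q ^ j \<le> q * 1" using assms by (intro mult_left_mono) auto
      thus ?thesis using assms by (simp only: power_Suc)
    qed
    ultimately show False by simp
  qed
  thus ?thesis unfolding qpoch_def by (simp add: prod_zero_iff)
qed

lemma qpoch_Suc: "qpoch a q (Suc k) = qpoch a q k * (1 - a * of_real q ^ k)"
  unfolding qpoch_def by simp

lemma ck_Suc: "ck q \<alpha> \<beta> (Suc k) z = ck q \<alpha> \<beta> k z * dd q \<alpha> \<beta> z k"
  unfolding ck_def dd_def by simp

lemma ck_0 [simp]: "ck q \<alpha> \<beta> 0 z = 1"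
  unfolding ck_def by simp

lemma AA_rec:
  assumes "0 < q" "q < 1"
  shows "AA q z (Suc k) * den q z k = AA q z k"
proof -
  have e1: "qpoch_inf (of_real q ^ (k+1) * z^2) q
      = (1 - of_real q ^ (k+1) * z^2) * qpoch_inf (of_real q ^ (Suc k+1) * z^2) q"
    using qpoch_inf_shift[OF assms, of "of_real q ^ (k+1) * z^2"]
    by (simp add: mult_ac)
  have e2: "qpoch (of_real q) q (Suc k) = qpoch (of_real q) q k * (1 - of_real q ^ (k+1))"
    by (simp add: qpoch_Suc)
  have n1: "qpoch (of_real q) q k \<noteq> 0" "qpoch (of_real q) q (Suc k) \<noteq> 0"
    using qpoch_nonzero[OF assms] by auto
  have n2: "1 - complex_of_real q ^ (k+1) \<noteq> 0"
    using n1(2) e2 by auto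
  define P2 where "P2 = qpoch_inf (of_real q ^ (Suc k+1) * z^2) q"
  define Qk where "Qk = qpoch (of_real q) q k"
  define u where "u = complex_of_real q ^ (k+1)"
  have n3: "1 - u \<noteq> 0" using n2 unfolding u_def .
  have n4: "Qk \<noteq> 0" using n1(1) unfolding Qk_def .
  have "AA q z (Suc k) * den q z k = P2 / (Qk * (1 - u)) * ((1 - u) * (1 - z^2 * u))"
    unfolding AA_def den_def e2 P2_def Qk_def u_def by simp
  also have "P2 / (Qk * (1 - u)) * ((1 - u) * (1 - z^2 * u)) = (1 - u * z^2) * P2 / Qk"
    using n3 n4 by (simp add: field_simps)
  also have "\<dots> = AA q z k"
    unfolding AA_def e1 P2_def Qk_def u_def by simp
  finally show ?thesis .
qed

lemma TT_rec:
  assumes "0 < q" "q < 1"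
  shows "TT q \<alpha> \<beta> z (Suc k) * den q z k = TT q \<alpha> \<beta> z k * dd q \<alpha> \<beta> z k"
  unfolding TT_def ck_Suc using AA_rec[OF assms, of z k]
  by (metis mult.assoc mult.commute)

lemma TT_0: "TT q \<alpha> \<beta> z 0 = qpoch_inf (of_real q * z^2) q"
  unfolding TT_def AA_def qpoch_def by simp

lemma TT_summable:
  assumes "0 < q" "q < 1" "norm \<alpha> < 1"
  shows "summable (\<lambda>k. norm (TT q \<alpha> \<beta> z k))"
proof -
  define r where "r = (1 + norm \<alpha>) / 2"
  have r: "norm \<alpha> < r" "r < 1" using assms(3) unfolding r_def by auto
  define x where "x = (\<lambda>k. complex_of_real q ^ k)"
  have x0: "x \<longlonglongrightarrow> 0" unfolding x_def
    by (rule LIMSEQ_power_zero) (use assms in auto)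
  have dd_eq: "dd q \<alpha> \<beta> z k = \<alpha> * (1 + z^2 * (x k)^2) - \<beta> * x k * (1 + z^2)" for k
    unfolding dd_def x_def by (simp add: power_mult mult.commute)
  have den_eq: "den q z k = (1 - of_real q * x k) * (1 - z^2 * (of_real q * x k))" for k
    unfolding den_def x_def by simp
  have "(\<lambda>k. \<alpha> * (1 + z^2 * (x k)^2) - \<beta> * x k * (1 + z^2)) \<longlonglongrightarrow> \<alpha> * (1 + z^2 * 0^2) - \<beta> * 0 * (1 + z^2)"
    by (intro tendsto_intros x0)
  hence td: "(\<lambda>k. dd q \<alpha> \<beta> z k) \<longlonglongrightarrow> \<alpha>" by (simp add: dd_eq)
  have "(\<lambda>k. (1 - of_real q * x k) * (1 - z^2 * (of_real q * x k))) \<longlonglongrightarrow> (1 - of_real q * 0) * (1 - z^2 * (of_real q * 0))"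
    by (intro tendsto_intros x0)
  hence tn: "(\<lambda>k. den q z k) \<longlonglongrightarrow> 1" by (simp add: den_eq)
  have "(\<lambda>k. norm (dd q \<alpha> \<beta> z k) - r * norm (den q z k)) \<longlonglongrightarrow> norm \<alpha> - r * norm (1::complex)"
    by (intro tendsto_intros td tn)
  hence "eventually (\<lambda>k. norm (dd q \<alpha> \<beta> z k) - r * norm (den q z k) < 0) sequentially"
    using r by (intro order_tendstoD(2)) auto
  then obtain N where N: "\<And>k. k \<ge> N \<Longrightarrow> norm (dd q \<alpha> \<beta> z k) < r * norm (den q z k)"
    unfolding eventually_sequentially by force
  show ?thesis
  proof (rule summable_ratio_test[OF r(2), of N])
    fix k assume k: "k \<ge> N"
    have "0 < r * norm (den q z k)"
      using N[OF k] norm_ge_zero[of "dd q \<alpha> \<beta> z k"] by linarith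
    moreover have "0 < r" using r(1) norm_ge_zero[of \<alpha>] by linarith
    ultimately have pos: "norm (den q z k) > 0"
      using zero_less_mult_pos by blast
    have "norm (TT q \<alpha> \<beta> z (Suc k)) * norm (den q z k) = norm (TT q \<alpha> \<beta> z k) * norm (dd q \<alpha> \<beta> z k)"
      using TT_rec[OF assms(1,2), of \<alpha> \<beta> z k] by (metis norm_mult)
    also have "\<dots> \<le> norm (TT q \<alpha> \<beta> z k) * (r * norm (den q z k))"
      using N[OF k] by (intro mult_left_mono) auto
    finally have "norm (TT q \<alpha> \<beta> z (Suc k)) \<le> r * norm (TT q \<alpha> \<beta> z k)"
      using pos by (simp add: mult_ac)
    thus "norm (norm (TT q \<alpha> \<beta> z (Suc k))) \<le> r * norm (norm (TT q \<alpha> \<beta> z k))" by simp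
  qed
qed



definition SS :: "real \<Rightarrow> complex \<Rightarrow> complex \<Rightarrow> complex \<Rightarrow> nat \<Rightarrow> complex" where
  "SS q \<alpha> \<beta> z m = (\<Sum>k. TT q \<alpha> \<beta> z k * of_real q ^ (m*k))"

lemma SS_summable:
  assumes "0 < q" "q < 1" "norm \<alpha> < 1"
  shows "summable (\<lambda>k. TT q \<alpha> \<beta> z k * of_real q ^ (m*k))"
proof (rule summable_comparison_test[OF _ TT_summable[OF assms]])
  show "\<exists>N. \<forall>n\<ge>N. norm (TT q \<alpha> \<beta> z n * complex_of_real q ^ (m * n)) \<le> norm (TT q \<alpha> \<beta> z n)"
  proof (intro exI allI impI)
    fix n :: nat
    have "q ^ (m*n) \<le> 1" using assms by (intro power_le_one) auto
    thus "norm (TT q \<alpha> \<beta> z n * complex_of_real q ^ (m * n)) \<le> norm (TT q \<alpha> \<beta> z n)"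
      using assms by (simp add: norm_mult norm_power mult_left_le)
  qed
qed

lemma SS_sums:
  assumes "0 < q" "q < 1" "norm \<alpha> < 1"
  shows "(\<lambda>k. TT q \<alpha> \<beta> z k * of_real q ^ (m*k)) sums SS q \<alpha> \<beta> z m"
  unfolding SS_def using SS_summable[OF assms] by (rule summable_sums)

lemma psi_SS:
  assumes "n \<ge> -1"
  shows "psi_plus q \<alpha> \<beta> n z = z powi n * SS q \<alpha> \<beta> z (nat (n+1))"
proof -
  have "of_real q powi ((n+1) * int k) = (of_real q :: complex) ^ (nat (n+1) * k)" for k
  proof -
    have "(n+1) * int k = int (nat (n+1) * k)" using assms by simp
    thus ?thesis by (simp only: power_int_of_nat)
  qed
  thus ?thesis unfolding psi_plus_def SS_def TT_def AA_def by simp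
qed

lemma SS_rec:
  assumes "0 < q" "q < 1" "norm \<alpha> < 1"
  shows "(1 - \<alpha> * of_real q ^ m) * (SS q \<alpha> \<beta> z m + z^2 * SS q \<alpha> \<beta> z (m+2))
          - (1 + z^2) * (1 - \<beta> * of_real q ^ m) * SS q \<alpha> \<beta> z (m+1) = 0"
proof -
  define x where "x = (of_real q :: complex) ^ m"
  define y where "y = (\<lambda>k. (of_real q :: complex) ^ k)"
  define t where "t = (\<lambda>k. TT q \<alpha> \<beta> z k * x ^ k)"
  define s0 where "s0 = SS q \<alpha> \<beta> z m"
  define s1 where "s1 = SS q \<alpha> \<beta> z (m+1)"
  define s2 where "s2 = SS q \<alpha> \<beta> z (m+2)"
  have h0: "t sums s0"
    using SS_sums[OF assms, of \<beta> z m] unfolding t_def s0_def x_def by (simp add: power_mult)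
  have p1: "(of_real q :: complex) ^ ((m+1)*k) = (of_real q ^ m) ^ k * of_real q ^ k" for k
    by (simp add: power_mult[symmetric] power_add[symmetric] algebra_simps)
  have p2: "(of_real q :: complex) ^ ((m+2)*k) = (of_real q ^ m) ^ k * (of_real q ^ k)^2" for k
  proof -
    have "(m+2)*k = m*k + k*2" by simp
    thus ?thesis by (simp only: power_mult[symmetric] power_add[symmetric])
  qed
  have h1: "(\<lambda>k. t k * y k) sums s1"
    using SS_sums[OF assms, of \<beta> z "m+1"] unfolding t_def s1_def x_def y_def p1
    by (simp add: mult_ac)
  have h2: "(\<lambda>k. t k * (y k)^2) sums s2"
    using SS_sums[OF assms, of \<beta> z "m+2"] unfolding t_def s2_def x_def y_def p2
    by (simp add: mult_ac)
  have E: "(\<lambda>k. t k + z^2 * (t k * (y k)^2) - (1 + z^2) * (t k * y k)) sums (s0 + z^2 * s2 - (1+z^2) * s1)"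
    by (intro sums_diff sums_add sums_mult h0 h1 h2)
  have D: "(\<lambda>k. x * (\<alpha> * t k + \<alpha> * z^2 * (t k * (y k)^2) - \<beta> * (1 + z^2) * (t k * y k))) sums
            (x * (\<alpha> * s0 + \<alpha> * z^2 * s2 - \<beta> * (1+z^2) * s1))"
    by (intro sums_diff sums_add sums_mult h0 h1 h2)
  define f where "f = (\<lambda>k. t k + z^2 * (t k * (y k)^2) - (1 + z^2) * (t k * y k))"
  have f0: "f 0 = 0" unfolding f_def y_def by (simp add: algebra_simps)
  have fS: "f (Suc k) = x * (\<alpha> * t k + \<alpha> * z^2 * (t k * (y k)^2) - \<beta> * (1 + z^2) * (t k * y k))" for k
  proof -
    have "f (Suc k) = TT q \<alpha> \<beta> z (Suc k) * den q z k * x ^ Suc k"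
      unfolding f_def t_def den_def y_def by (simp add: algebra_simps power2_eq_square)
    also have "\<dots> = TT q \<alpha> \<beta> z k * dd q \<alpha> \<beta> z k * x ^ Suc k"
      by (simp add: TT_rec[OF assms(1,2)])
    also have "\<dots> = x * (\<alpha> * t k + \<alpha> * z^2 * (t k * (y k)^2) - \<beta> * (1 + z^2) * (t k * y k))"
      unfolding t_def dd_def y_def by (simp add: algebra_simps power_mult power2_eq_square)
    finally show ?thesis .
  qed
  have "(\<lambda>k. f (Suc k)) sums (x * (\<alpha> * s0 + \<alpha> * z^2 * s2 - \<beta> * (1+z^2) * s1))"
    using D by (simp add: fS)
  hence "f sums (x * (\<alpha> * s0 + \<alpha> * z^2 * s2 - \<beta> * (1+z^2) * s1))"
    by (simp add: sums_Suc_iff f0)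
  moreover have "f sums (s0 + z^2 * s2 - (1+z^2) * s1)"
    using E unfolding f_def .
  ultimately have eq: "x * (\<alpha> * s0 + \<alpha> * z^2 * s2 - \<beta> * (1+z^2) * s1) = s0 + z^2 * s2 - (1+z^2) * s1"
    using sums_unique2 by blast
  have "(1 - \<alpha> * x) * (s0 + z^2 * s2) - (1 + z^2) * (1 - \<beta> * x) * s1
        = (s0 + z^2 * s2 - (1+z^2) * s1) - x * (\<alpha> * s0 + \<alpha> * z^2 * s2 - \<beta> * (1+z^2) * s1)"
    by (simp add: algebra_simps)
  also have "\<dots> = 0" using eq by simp
  finally show ?thesis unfolding x_def s0_def s1_def s2_def .
qed



lemma psi_rec:
  assumes "0 < q" "q < 1" "norm \<alpha> < 1" "z \<noteq> 0" "n \<ge> 0"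
  shows "psi_plus q \<alpha> \<beta> (n-1) z
            - (z + inverse z) * (1 - \<beta> * of_real q powi n) / (1 - \<alpha> * of_real q powi n)
              * psi_plus q \<alpha> \<beta> n z
            + psi_plus q \<alpha> \<beta> (n+1) z = 0"
proof -
  obtain m where n: "n = int m" using assms(5) nonneg_int_cases by blast
  define x where "x = (of_real q :: complex) ^ m"
  define w where "w = z powi (int m - 1)"
  have qx: "of_real q powi n = x" unfolding n x_def by simp
  have nx: "1 - \<alpha> * x \<noteq> 0"
  proof -
    have "norm x \<le> 1" unfolding x_def using assms by (simp add: norm_power power_le_one)
    hence "norm \<alpha> * norm x \<le> norm \<alpha>" by (simp add: mult_left_le)
    hence "norm (\<alpha> * x) < 1" using assms(3) by (simp add: norm_mult)
    hence "\<alpha> * x \<noteq> 1" by auto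
    thus ?thesis by simp
  qed
  have w1: "z powi n = w * z"
    unfolding n w_def using power_int_add[of z "int m - 1" 1] assms(4) by simp
  have w2: "z powi (n+1) = w * z * z"
  proof -
    have "z powi (int m + 1) = z powi (int m - 1 + 2)" by (simp add: algebra_simps)
    also have "\<dots> = z powi (int m - 1) * z powi 2" using assms(4) by (rule power_int_add[OF disjI1])
    finally show ?thesis unfolding n w_def by (simp add: power2_eq_square mult_ac)
  qed
  have p0: "psi_plus q \<alpha> \<beta> (n-1) z = w * SS q \<alpha> \<beta> z m"
    using psi_SS[of "n-1" q \<alpha> \<beta> z] unfolding n w_def by simp
  have p1: "psi_plus q \<alpha> \<beta> n z = w * z * SS q \<alpha> \<beta> z (m+1)"
  proof -
    have "nat (n+1) = m+1" unfolding n by simp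
    thus ?thesis using psi_SS[of "n" q \<alpha> \<beta> z] w1 assms(5) by simp
  qed
  have p2: "psi_plus q \<alpha> \<beta> (n+1) z = w * z * z * SS q \<alpha> \<beta> z (m+2)"
  proof -
    have "nat (n+1+1) = m+2" unfolding n by simp
    thus ?thesis using psi_SS[of "n+1" q \<alpha> \<beta> z] w2 assms(5) by simp
  qed
  define s0 where "s0 = SS q \<alpha> \<beta> z m"
  define s1 where "s1 = SS q \<alpha> \<beta> z (m+1)"
  define s2 where "s2 = SS q \<alpha> \<beta> z (m+2)"
  have R: "(1 - \<alpha> * x) * (s0 + z^2 * s2) - (1 + z^2) * (1 - \<beta> * x) * s1 = 0"
    using SS_rec[OF assms(1-3), of m \<beta> z] unfolding x_def s0_def s1_def s2_def .
  define C where "C = (1 - \<beta> * x) / (1 - \<alpha> * x)"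
  have zz: "(z + inverse z) * z = 1 + z^2" using assms(4) by (simp add: field_simps power2_eq_square)
  have sC: "s0 + z^2 * s2 = (1 + z^2) * C * s1"
  proof -
    have "(1 - \<alpha> * x) * (s0 + z^2 * s2) = (1 + z^2) * (1 - \<beta> * x) * s1" using R by simp
    hence "s0 + z^2 * s2 = (1 + z^2) * (1 - \<beta> * x) * s1 / (1 - \<alpha> * x)"
      using nx by (simp add: eq_divide_eq mult.commute)
    thus ?thesis unfolding C_def by simp
  qed
  have "w * s0 - (z + inverse z) * (1 - \<beta> * x) / (1 - \<alpha> * x) * (w * z * s1) + w * z * z * s2
      = w * (s0 + z^2 * s2) - w * ((z + inverse z) * z) * C * s1"
  proof -
    have cc: "(z + inverse z) * (1 - \<beta> * x) / (1 - \<alpha> * x) = (z + inverse z) * C"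
      unfolding C_def by simp
    show ?thesis unfolding cc by (simp add: algebra_simps power2_eq_square)
  qed
  also have "\<dots> = 0" unfolding zz sC by (simp add: algebra_simps)
  finally show ?thesis
    unfolding p0 p1 p2 qx s0_def s1_def s2_def .
qed

lemma psi_minus_rec:
  assumes "0 < q" "q < 1" "norm \<alpha> < 1" "z \<noteq> 0" "n \<ge> 0"
  shows "psi_minus q \<alpha> \<beta> (n-1) z
            - (z + inverse z) * (1 - \<beta> * of_real q powi n) / (1 - \<alpha> * of_real q powi n)
              * psi_minus q \<alpha> \<beta> n z
            + psi_minus q \<alpha> \<beta> (n+1) z = 0"
proof -
  have nz: "inverse z \<noteq> 0" using assms(4) by simp
  have e: "inverse z + inverse (inverse z) = z + inverse z" by (simp add: add.commute)
  show ?thesis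
    using psi_rec[OF assms(1-3) nz assms(5), of \<beta>] unfolding psi_minus_def e .
qed

lemma SS_lim:
  assumes "0 < q" "q < 1" "norm \<alpha> < 1"
  shows "(\<lambda>m. SS q \<alpha> \<beta> z m) \<longlonglongrightarrow> TT q \<alpha> \<beta> z 0"
proof (rule LIM_zero_cancel)
  define B where "B = (\<Sum>k. norm (TT q \<alpha> \<beta> z (Suc k)))"
  have sB: "summable (\<lambda>k. norm (TT q \<alpha> \<beta> z (Suc k)))"
    using TT_summable[OF assms, of \<beta> z] by (subst summable_Suc_iff)
  have bound: "norm (SS q \<alpha> \<beta> z m - TT q \<alpha> \<beta> z 0) \<le> q ^ m * B" for m
  proof -
    have sm: "summable (\<lambda>k. TT q \<alpha> \<beta> z k * of_real q ^ (m*k))"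
      by (rule SS_summable[OF assms])
    have "SS q \<alpha> \<beta> z m - TT q \<alpha> \<beta> z 0 = (\<Sum>k. TT q \<alpha> \<beta> z (Suc k) * of_real q ^ (m * Suc k))"
      unfolding SS_def using suminf_split_head[OF sm] by simp
    also have "norm \<dots> \<le> (\<Sum>k. norm (TT q \<alpha> \<beta> z (Suc k) * of_real q ^ (m * Suc k)))"
    proof (rule summable_norm)
      have "summable (\<lambda>k. norm (TT q \<alpha> \<beta> z k * of_real q ^ (m*k)))"
        by (rule summable_comparison_test[OF _ TT_summable[OF assms, of \<beta> z]])
           (use assms in \<open>auto simp: norm_mult norm_power intro!: mult_left_le power_le_one\<close>)
      thus "summable (\<lambda>k. norm (TT q \<alpha> \<beta> z (Suc k) * of_real q ^ (m * Suc k)))"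
        by (subst summable_Suc_iff[where f = "\<lambda>k. norm (TT q \<alpha> \<beta> z k * of_real q ^ (m*k))"])
    qed
    also have "\<dots> \<le> (\<Sum>k. norm (TT q \<alpha> \<beta> z (Suc k)) * q ^ m)"
    proof (rule suminf_le)
      fix k
      have "q ^ (m * Suc k) \<le> q ^ m"
        using assms by (intro power_decreasing) auto
      thus "norm (TT q \<alpha> \<beta> z (Suc k) * of_real q ^ (m * Suc k)) \<le> norm (TT q \<alpha> \<beta> z (Suc k)) * q ^ m"
        using assms by (simp add: norm_mult norm_power mult_left_mono)
    next
      show "summable (\<lambda>k. norm (TT q \<alpha> \<beta> z (Suc k)) * q ^ m)"
        using sB by (rule summable_mult2)
      have "summable (\<lambda>k. norm (TT q \<alpha> \<beta> z k * of_real q ^ (m*k)))"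
        by (rule summable_comparison_test[OF _ TT_summable[OF assms, of \<beta> z]])
           (use assms in \<open>auto simp: norm_mult norm_power intro!: mult_left_le power_le_one\<close>)
      thus "summable (\<lambda>k. norm (TT q \<alpha> \<beta> z (Suc k) * of_real q ^ (m * Suc k)))"
        by (subst summable_Suc_iff[where f = "\<lambda>k. norm (TT q \<alpha> \<beta> z k * of_real q ^ (m*k))"])
    qed
    also have "\<dots> = q ^ m * B"
      unfolding B_def using suminf_mult2[OF sB, of "q^m"] by (simp add: mult.commute)
    finally show ?thesis .
  qed
  have "(\<lambda>m. q ^ m * B) \<longlonglongrightarrow> 0 * B"
    by (intro tendsto_intros) (use assms in auto)
  hence g0: "(\<lambda>m. q ^ m * B) \<longlonglongrightarrow> 0" by simp
  show "(\<lambda>m. SS q \<alpha> \<beta> z m - TT q \<alpha> \<beta> z 0) \<longlonglongrightarrow> 0"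
    by (rule Lim_null_comparison[OF always_eventually[OF allI[OF bound]] g0])
qed



lemma nat_int_plus1: "nat (int m + 1) = Suc m" by simp

lemma wronsk:
  assumes "0 < q" "q < 1" "norm \<alpha> < 1" "z \<noteq> 0" "n \<ge> -1"
  shows "psi_plus q \<alpha> \<beta> n z * psi_minus q \<alpha> \<beta> (n+1) z
            - psi_plus q \<alpha> \<beta> (n+1) z * psi_minus q \<alpha> \<beta> n z
            = inverse z * qpoch_inf (z^2) q * qpoch_inf (of_real q * inverse (z^2)) q"
proof -
  define P where "P = (\<lambda>n. psi_plus q \<alpha> \<beta> n z)"
  define M where "M = (\<lambda>n. psi_minus q \<alpha> \<beta> n z)"
  define c where "c = (\<lambda>n. (z + inverse z) * (1 - \<beta> * of_real q powi n) / (1 - \<alpha> * of_real q powi n))"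
  define W where "W = (\<lambda>n. P n * M (n+1) - P (n+1) * M n)"
  have stepW: "W (n+1) = W n" if "n \<ge> -1" for n
  proof -
    have rp: "P (n+1+1) = c (n+1) * P (n+1) - P n"
      using psi_rec[OF assms(1-4), of "n+1" \<beta>] that unfolding P_def c_def
      by (simp add: algebra_simps)
    have rm: "M (n+1+1) = c (n+1) * M (n+1) - M n"
      using psi_minus_rec[OF assms(1-4), of "n+1" \<beta>] that unfolding M_def c_def
      by (simp add: algebra_simps)
    show ?thesis unfolding W_def rp rm by (simp add: algebra_simps)
  qed
  have const: "W (int m - 1) = W (-1)" for m
  proof (induction m)
    case (Suc m)
    have "W (int (Suc m) - 1) = W ((int m - 1) + 1)" by simp
    also have "\<dots> = W (int m - 1)" by (rule stepW) simp
    finally show ?case using Suc by simp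
  qed simp
  define Sp where "Sp = SS q \<alpha> \<beta> z"
  define Sm where "Sm = SS q \<alpha> \<beta> (inverse z)"
  define T0p where "T0p = TT q \<alpha> \<beta> z 0"
  define T0m where "T0m = TT q \<alpha> \<beta> (inverse z) 0"
  have Wform: "W (int m - 1) = inverse z * Sp m * Sm (m+1) - z * Sp (m+1) * Sm m" for m
  proof -
    have a1: "P (int m - 1) = z ^ m / z * Sp m"
      using psi_SS[of "int m - 1" q \<alpha> \<beta> z] assms(4) unfolding P_def Sp_def
      by (simp add: power_int_diff)
    have a2: "M (int m - 1 + 1) = inverse (z ^ m) * Sm (m+1)"
      using psi_SS[of "int m" q \<alpha> \<beta> "inverse z"] unfolding M_def Sm_def psi_minus_def
      by (simp add: nat_int_plus1 power_inverse)
    have a3: "P (int m - 1 + 1) = z ^ m * Sp (m+1)"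
      using psi_SS[of "int m" q \<alpha> \<beta> z] unfolding P_def Sp_def
      by (simp add: nat_int_plus1)
    have a4: "M (int m - 1) = inverse (z ^ m / z) * Sm m"
      using psi_SS[of "int m - 1" q \<alpha> \<beta> "inverse z"] assms(4) unfolding M_def Sm_def psi_minus_def
      by (simp add: power_int_diff power_inverse divide_inverse)
    show ?thesis unfolding W_def a1 a2 a3 a4 using assms(4)
      by (simp add: field_simps)
  qed
  have lp: "Sp \<longlonglongrightarrow> T0p" unfolding Sp_def T0p_def by (rule SS_lim[OF assms(1-3)])
  have lm: "Sm \<longlonglongrightarrow> T0m" unfolding Sm_def T0m_def by (rule SS_lim[OF assms(1-3)])
  have lp1: "(\<lambda>m. Sp (m+1)) \<longlonglongrightarrow> T0p" using lp by (rule LIMSEQ_ignore_initial_segment)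
  have lm1: "(\<lambda>m. Sm (m+1)) \<longlonglongrightarrow> T0m" using lm by (rule LIMSEQ_ignore_initial_segment)
  have "(\<lambda>m. inverse z * Sp m * Sm (m+1) - z * Sp (m+1) * Sm m) \<longlonglongrightarrow> inverse z * T0p * T0m - z * T0p * T0m"
    by (intro tendsto_intros lp lm lp1 lm1)
  hence "(\<lambda>m. W (-1)) \<longlonglongrightarrow> inverse z * T0p * T0m - z * T0p * T0m"
    using Wform const by simp
  hence W1: "W (-1) = inverse z * T0p * T0m - z * T0p * T0m"
    using LIMSEQ_const_iff by blast
  have Pz: "qpoch_inf (z^2) q = (1 - z^2) * T0p"
    unfolding T0p_def TT_0 using qpoch_inf_shift[OF assms(1,2), of "z^2"] by (simp add: mult.commute)
  have Tm: "qpoch_inf (of_real q * inverse (z^2)) q = T0m"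
    unfolding T0m_def TT_0 by (simp add: power_inverse)
  have iz: "inverse z * z^2 = z" using assms(4) by (simp add: power2_eq_square)
  have "inverse z * ((1 - z^2) * T0p) * T0m = inverse z * T0p * T0m - (inverse z * z^2) * T0p * T0m"
    by (simp add: algebra_simps)
  hence V: "W (-1) = inverse z * qpoch_inf (z^2) q * qpoch_inf (of_real q * inverse (z^2)) q"
    unfolding W1 Pz Tm iz by simp
  have nm: "n = int (nat (n+1)) - 1" using assms(5) by simp
  obtain m where m: "n = int m - 1" using nm by blast
  show ?thesis using const[of m] V unfolding m W_def P_def M_def by simp
qed



lemma zero_prop:
  fixes y c :: "int \<Rightarrow> complex"
  assumes rec: "\<And>n. n \<ge> 0 \<Longrightarrow> y (n-1) - c n * y n + y (n+1) = 0"
    and y1: "y (-1) = 0" and y0: "y 0 = 0" and n: "n \<ge> -1"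
  shows "y n = 0"
proof -
  have "y (int m - 1) = 0 \<and> y (int m) = 0" for m
  proof (induction m)
    case 0 then show ?case using y1 y0 by simp
  next
    case (Suc m)
    have "y (int m - 1) - c (int m) * y (int m) + y (int m + 1) = 0" using rec[of "int m"] by simp
    with Suc show ?case by (simp add: add.commute)
  qed
  moreover have "n = int (nat (n+1)) - 1" using n by simp
  then obtain m where "n = int m - 1" by blast
  ultimately show ?thesis by blast
qed

lemma sq_powr_iff:
  fixes z :: complex
  assumes "0 < q"
  shows "(\<exists>j::int. z = of_real (q powr (of_int j / 2)) \<or> z = - of_real (q powr (of_int j / 2)))
     \<longleftrightarrow> (\<exists>j::int. z^2 = of_real (q powr of_int j))"
proof -
  have e: "(of_real (q powr (of_int j / 2)) :: complex)^2 = of_real (q powr of_int j)" for j :: int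
  proof -
    have "(q powr (of_int j / 2))^2 = q powr (of_int j / 2) * q powr (of_int j / 2)"
      by (simp add: power2_eq_square)
    also have "\<dots> = q powr (of_int j)" by (simp add: powr_add[symmetric])
    finally show ?thesis by (metis of_real_power)
  qed
  show ?thesis
  proof
    assume "\<exists>j::int. z = of_real (q powr (of_int j / 2)) \<or> z = - of_real (q powr (of_int j / 2))"
    then obtain j :: int where "z = of_real (q powr (of_int j / 2)) \<or> z = - of_real (q powr (of_int j / 2))" by blast
    hence "z^2 = of_real (q powr of_int j)" using e[of j] by auto
    thus "\<exists>j::int. z^2 = of_real (q powr of_int j)" by blast
  next
    assume "\<exists>j::int. z^2 = of_real (q powr of_int j)"
    then obtain j :: int where "z^2 = of_real (q powr of_int j)" by blast
    hence "z^2 = (of_real (q powr (of_int j / 2)))^2" using e[of j] by simp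
    hence "z = of_real (q powr (of_int j / 2)) \<or> z = - of_real (q powr (of_int j / 2))"
      by (simp add: power2_eq_iff)
    thus "\<exists>j::int. z = of_real (q powr (of_int j / 2)) \<or> z = - of_real (q powr (of_int j / 2))" by blast
  qed
qed

lemma V_zero_iff:
  assumes "0 < q" "q < 1" "z \<noteq> 0"
  shows "inverse z * qpoch_inf (z^2) q * qpoch_inf (of_real q * inverse (z^2)) q = 0
     \<longleftrightarrow> (\<exists>j::int. z = of_real (q powr (of_int j / 2)) \<or> z = - of_real (q powr (of_int j / 2)))"
proof -
  have qn: "(of_real q :: complex) ^ k \<noteq> 0" for k using assms by simp
  have pw1: "(of_real (q powr of_int (- int k)) :: complex) = inverse (of_real q ^ k)" for k
    using assms by (simp add: powr_minus powr_realpow)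
  have pw2: "(of_real (q powr of_int (int (Suc k))) :: complex) = of_real q ^ Suc k" for k
    using assms by (simp add: powr_realpow del: of_nat_Suc)
  have "inverse z * qpoch_inf (z^2) q * qpoch_inf (of_real q * inverse (z^2)) q = 0
     \<longleftrightarrow> qpoch_inf (z^2) q = 0 \<or> qpoch_inf (of_real q * inverse (z^2)) q = 0"
    using assms by simp
  also have "\<dots> \<longleftrightarrow> (\<exists>k. z^2 * of_real q ^ k = 1) \<or> (\<exists>k. of_real q * inverse (z^2) * of_real q ^ k = 1)"
    using qpoch_inf_eq0_iff[OF assms(1,2)] by simp
  also have "\<dots> \<longleftrightarrow> (\<exists>j::int. z^2 = of_real (q powr of_int j))"
  proof
    assume "(\<exists>k. z^2 * of_real q ^ k = 1) \<or> (\<exists>k. of_real q * inverse (z^2) * of_real q ^ k = 1)"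
    then show "\<exists>j::int. z^2 = of_real (q powr of_int j)"
    proof
      assume "\<exists>k. z^2 * of_real q ^ k = 1"
      then obtain k where "z^2 * of_real q ^ k = 1" by blast
      hence "z^2 = of_real (q powr of_int (- int k))" unfolding pw1 using qn[of k]
        by (simp add: field_simps)
      thus ?thesis by blast
    next
      assume "\<exists>k. of_real q * inverse (z^2) * of_real q ^ k = 1"
      then obtain k where "of_real q * inverse (z^2) * of_real q ^ k = 1" by blast
      hence "z^2 = of_real (q powr of_int (int (Suc k)))" unfolding pw2 using assms(3)
        by (simp add: field_simps)
      thus ?thesis by blast
    qed
  next
    assume "\<exists>j::int. z^2 = of_real (q powr of_int j)"
    then obtain j :: int where j: "z^2 = of_real (q powr of_int j)" by blast
    show "(\<exists>k. z^2 * of_real q ^ k = 1) \<or> (\<exists>k. of_real q * inverse (z^2) * of_real q ^ k = 1)"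
    proof (cases "j \<le> 0")
      case True
      have "j = - int (nat (- j))" using True by simp
      then obtain k where "j = - int k" by blast
      hence "z^2 = inverse (of_real q ^ k)" using j pw1 by simp
      hence "z^2 * of_real q ^ k = 1" using qn[of k] by simp
      thus ?thesis by blast
    next
      case False
      have "j = int (Suc (nat (j - 1)))" using False by simp
      then obtain k where "j = int (Suc k)" by blast
      hence "z^2 = of_real q ^ Suc k" using j pw2 by simp
      hence "of_real q * inverse (z^2) * of_real q ^ k = 1" using assms(1,3)
        by (simp add: field_simps)
      thus ?thesis by blast
    qed
  qed
  also have "\<dots> \<longleftrightarrow> (\<exists>j::int. z = of_real (q powr (of_int j / 2)) \<or> z = - of_real (q powr (of_int j / 2)))"
    using sq_powr_iff[OF assms(1)] by simp
  finally show ?thesis .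
qed



theorem proposition2p4:
  fixes q :: real and \<alpha> \<beta> z :: complex
  assumes "0 < q" "q < 1" "norm \<alpha> < 1" "z \<noteq> 0"
  shows "(\<forall>n::int. n \<ge> 0 \<longrightarrow>
            psi_plus q \<alpha> \<beta> (n-1) z
            - (z + inverse z) * (1 - \<beta> * of_real q powi n) / (1 - \<alpha> * of_real q powi n)
              * psi_plus q \<alpha> \<beta> n z
            + psi_plus q \<alpha> \<beta> (n+1) z = 0)
       \<and> (\<forall>n::int. n \<ge> 0 \<longrightarrow>
            psi_minus q \<alpha> \<beta> (n-1) z
            - (z + inverse z) * (1 - \<beta> * of_real q powi n) / (1 - \<alpha> * of_real q powi n)
              * psi_minus q \<alpha> \<beta> n z
            + psi_minus q \<alpha> \<beta> (n+1) z = 0)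
       \<and> (\<forall>n::int. n \<ge> -1 \<longrightarrow>
            psi_plus q \<alpha> \<beta> n z * psi_minus q \<alpha> \<beta> (n+1) z
            - psi_plus q \<alpha> \<beta> (n+1) z * psi_minus q \<alpha> \<beta> n z
            = inverse z * qpoch_inf (z^2) q * qpoch_inf (of_real q * inverse (z^2)) q)
       \<and> ((\<forall>a b :: complex.
              (\<forall>n::int. n \<ge> -1 \<longrightarrow> a * psi_plus q \<alpha> \<beta> n z + b * psi_minus q \<alpha> \<beta> n z = 0)
              \<longrightarrow> a = 0 \<and> b = 0)
          \<longleftrightarrow> \<not> (\<exists>j::int. z = of_real (q powr (of_int j / 2)) \<or> z = - of_real (q powr (of_int j / 2))))"
proof -
  define P where "P = (\<lambda>n. psi_plus q \<alpha> \<beta> n z)"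
  define M where "M = (\<lambda>n. psi_minus q \<alpha> \<beta> n z)"
  define c where "c = (\<lambda>n. (z + inverse z) * (1 - \<beta> * of_real q powi n) / (1 - \<alpha> * of_real q powi n))"
  define V where "V = inverse z * qpoch_inf (z^2) q * qpoch_inf (of_real q * inverse (z^2)) q"
  have rp: "\<And>n. n \<ge> 0 \<Longrightarrow> P (n-1) - c n * P n + P (n+1) = 0"
    unfolding P_def c_def using psi_rec[OF assms] by simp
  have rm: "\<And>n. n \<ge> 0 \<Longrightarrow> M (n-1) - c n * M n + M (n+1) = 0"
    unfolding M_def c_def using psi_minus_rec[OF assms] by simp
  have W: "\<And>n. n \<ge> -1 \<Longrightarrow> P n * M (n+1) - P (n+1) * M n = V"
    unfolding P_def M_def V_def using wronsk[OF assms] by simp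
  have W1: "P (-1) * M 0 - P 0 * M (-1) = V" using W[of "-1"] by simp
  have indep: "(\<forall>a b :: complex. (\<forall>n::int. n \<ge> -1 \<longrightarrow> a * P n + b * M n = 0) \<longrightarrow> a = 0 \<and> b = 0)
      \<longleftrightarrow> V \<noteq> 0"
  proof
    assume H: "\<forall>a b :: complex. (\<forall>n::int. n \<ge> -1 \<longrightarrow> a * P n + b * M n = 0) \<longrightarrow> a = 0 \<and> b = 0"
    show "V \<noteq> 0"
    proof
      assume V0: "V = 0"
      obtain a b :: complex where ab: "\<not> (a = 0 \<and> b = 0)" "a * P (-1) + b * M (-1) = 0" "a * P 0 + b * M 0 = 0"
      proof (cases "M (-1) \<noteq> 0")
        case True
        show ?thesis
          by (rule that[of "M (-1)" "- P (-1)"]) (use True W1 V0 in \<open>auto simp: algebra_simps\<close>)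
      next
        case False
        show ?thesis
        proof (cases "M 0 \<noteq> 0")
          case True
          show ?thesis
            by (rule that[of "M 0" "- P 0"]) (use True False W1 V0 in \<open>auto simp: algebra_simps\<close>)
        next
          case F2: False
          show ?thesis by (rule that[of 0 1]) (use False F2 in auto)
        qed
      qed
      have "\<forall>n::int. n \<ge> -1 \<longrightarrow> a * P n + b * M n = 0"
      proof (intro allI impI)
        fix n :: int assume n: "n \<ge> -1"
        show "a * P n + b * M n = 0"
        proof (rule zero_prop[where y = "\<lambda>n. a * P n + b * M n" and c = c, OF _ ab(2) ab(3) n])
          fix n :: int assume "n \<ge> 0"
          have "a * P (n - 1) + b * M (n - 1) - c n * (a * P n + b * M n) + (a * P (n + 1) + b * M (n + 1))
              = a * (P (n-1) - c n * P n + P (n+1)) + b * (M (n-1) - c n * M n + M (n+1))"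
            by (simp add: algebra_simps)
          thus "a * P (n - 1) + b * M (n - 1) - c n * (a * P n + b * M n) + (a * P (n + 1) + b * M (n + 1)) = 0"
            using rp[OF \<open>n \<ge> 0\<close>] rm[OF \<open>n \<ge> 0\<close>] by simp
        qed
      qed
      with H ab(1) show False by blast
    qed
  next
    assume V0: "V \<noteq> 0"
    show "\<forall>a b :: complex. (\<forall>n::int. n \<ge> -1 \<longrightarrow> a * P n + b * M n = 0) \<longrightarrow> a = 0 \<and> b = 0"
    proof (intro allI impI)
      fix a b :: complex
      assume h: "\<forall>n::int. n \<ge> -1 \<longrightarrow> a * P n + b * M n = 0"
      have e1: "a * P (-1) + b * M (-1) = 0" using h by simp
      have e0: "a * P 0 + b * M 0 = 0" using h by simp
      have "a * V = M 0 * (a * P (-1) + b * M (-1)) - M (-1) * (a * P 0 + b * M 0)"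
        using W1 by (auto simp: algebra_simps)
      hence "a * V = 0" using e1 e0 by simp
      moreover have "b * V = P (-1) * (a * P 0 + b * M 0) - P 0 * (a * P (-1) + b * M (-1))"
        using W1 by (auto simp: algebra_simps)
      hence "b * V = 0" using e1 e0 by simp
      ultimately show "a = 0 \<and> b = 0" using V0 by simp
    qed
  qed
  have "V = 0 \<longleftrightarrow> (\<exists>j::int. z = of_real (q powr (of_int j / 2)) \<or> z = - of_real (q powr (of_int j / 2)))"
    unfolding V_def by (rule V_zero_iff[OF assms(1,2,4)])
  with indep have part4: "(\<forall>a b :: complex. (\<forall>n::int. n \<ge> -1 \<longrightarrow> a * P n + b * M n = 0) \<longrightarrow> a = 0 \<and> b = 0)
      \<longleftrightarrow> \<not> (\<exists>j::int. z = of_real (q powr (of_int j / 2)) \<or> z = - of_real (q powr (of_int j / 2)))"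
    by simp
  show ?thesis
    using psi_rec[OF assms] psi_minus_rec[OF assms] wronsk[OF assms] part4
    unfolding P_def M_def by blast
qed


end
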